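(* Let $n\ge1$, let $\theta_1,\dots,\theta_n,\theta\in\mathbb R$, $\boldsymbol\theta=(\theta_1,\dots,\theta_n)$, and define $|W_n(\boldsymbol\theta)\rangle=\frac1{\sqrt n}\sum_{j=1}^ne^{i\theta_j}X_j|0\rangle^{\otimes n}$, $|W_n(\theta)\rangle=|W_n((\theta,2\theta,\dots,n\theta))\rangle$, and $|W_n\rangle=|W_n(0)\rangle$. Then $$\|\Xi_{W_n(\boldsymbol\theta)}\|_4^4=\frac{d}{n^4}\Bigl[6n(n-1)+\Bigl|\sum_{j=1}^ne^{4i\theta_j}\Bigr|^2\Bigr],\qquad M_2(W_n(\boldsymbol\theta))=\log_2\frac{n^4}{6n(n-1)+\bigl|\sum_{j=1}^ne^{4i\theta_j}\bigr|^2};$$ in particular $\|\Xi_{W_n}\|_4^4=\frac{d(7n-6)}{n^3}$, $M_2(W_n)=\log_2\frac{n^3}{7n-6}$, and $$\|\Xi_{W_n(\theta)}\|_4^4=\frac{d[6n^2-6n+\sin^2(2n\theta)/\sin^2(2\theta)]}{n^4},\qquad M_2(W_n(\theta))=\log_2\frac{n^4}{6n^2-6n+\sin^2(2n\theta)/\sin^2(2\theta)}$$ (with $\sin^2(2n\theta)/\sin^2(2\theta)$ interpreted as $n^2$ when $\sin(2\theta)=0$).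
   Context: $d=2^n$; $X_j$ denotes the Pauli $X$ acting on the $j$th qubit. $\overline{\mathcal P}_n=\{I,X,Y,Z\}^{\otimes n}$; for a pure state $|\psi\rangle$, $\Xi_\psi(P)=\langle\psi|P|\psi\rangle$ for $P\in\overline{\mathcal P}_n$, $\|\Xi_\psi\|_4^4=\sum_P\Xi_\psi(P)^4$, and the stabilizer 2-Rényi entropy is $M_2(\psi)=-\log_2(\|\Xi_\psi\|_4^4/d)$. *)

theory Defs
  imports Complex_Main
begin

text \<open>A computational basis bit is a bool,
  False = |0>, True = |1>.  n-qubit basis states are bool lists of length n,
  n-qubit Pauli strings (elements of {I,X,Y,Z}^{\<otimes>n}) are pauli lists of length n;
  list position k corresponds to qubit k+1.\<close>

datatype pauli = PI | PX | PY | PZ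

fun pauli_entry :: "pauli \<Rightarrow> bool \<Rightarrow> bool \<Rightarrow> complex" where
  "pauli_entry PI a b = (if a = b then 1 else 0)"
| "pauli_entry PX a b = (if a \<noteq> b then 1 else 0)"
| "pauli_entry PY a b = (if a = False \<and> b = True then - \<i>
                          else if a = True \<and> b = False then \<i> else 0)"
| "pauli_entry PZ a b = (if a = b then (if a then -1 else 1) else 0)"

definition string_entry :: "pauli list \<Rightarrow> bool list \<Rightarrow> bool list \<Rightarrow> complex" where
  "string_entry ps a b = (\<Prod>k<length ps. pauli_entry (ps ! k) (a ! k) (b ! k))"

definition basis_states :: "nat \<Rightarrow> bool list set" where
  "basis_states n = {xs. length xs = n}"

definition pauli_strings :: "nat \<Rightarrow> pauli list set" where
  "pauli_strings n = {ps. length ps = n}"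

type_synonym qstate = "bool list \<Rightarrow> complex"

definition apply_string :: "nat \<Rightarrow> pauli list \<Rightarrow> qstate \<Rightarrow> qstate" where
  "apply_string n ps v = (\<lambda>a. \<Sum>b\<in>basis_states n. string_entry ps a b * v b)"

definition zero_state :: "nat \<Rightarrow> qstate" where
  "zero_state n = (\<lambda>a. if a = replicate n False then 1 else 0)"

definition X_on :: "nat \<Rightarrow> nat \<Rightarrow> pauli list" where
  "X_on n j = map (\<lambda>k. if k = j - 1 then PX else PI) [0..<n]"

text \<open>Pauli spectrum Xi_psi(P) = <psi|P|psi> (real since P is Hermitian).\<close>
definition Xi :: "nat \<Rightarrow> qstate \<Rightarrow> pauli list \<Rightarrow> real" where
  "Xi n \<psi> P = Re (\<Sum>a\<in>basis_states n. cnj (\<psi> a) * apply_string n P \<psi> a)"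

definition Xi_norm4_pow4 :: "nat \<Rightarrow> qstate \<Rightarrow> real" where
  "Xi_norm4_pow4 n \<psi> = (\<Sum>P\<in>pauli_strings n. (Xi n \<psi> P) ^ 4)"

definition M2 :: "nat \<Rightarrow> qstate \<Rightarrow> real" where
  "M2 n \<psi> = - log 2 (Xi_norm4_pow4 n \<psi> / 2 ^ n)"

definition W_state :: "nat \<Rightarrow> (nat \<Rightarrow> real) \<Rightarrow> qstate" where
  "W_state n \<theta> = (\<lambda>a. complex_of_real (1 / sqrt (real n)) *
      (\<Sum>j=1..n. cis (\<theta> j) * apply_string n (X_on n j) (zero_state n) a))"

end

theory Submission imports Defs begin

definition ej :: "nat \<Rightarrow> nat \<Rightarrow> bool list" where
  "ej n j = map (\<lambda>k. Suc k = j) [0..<n]"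

definition zs :: "nat \<Rightarrow> bool list" where "zs n = replicate n False"

definition AA :: "nat \<Rightarrow> pauli list \<Rightarrow> complex" where
  "AA n Q = string_entry Q (zs n) (zs n)"
definition BB :: "nat \<Rightarrow> (nat \<Rightarrow> complex) \<Rightarrow> pauli list \<Rightarrow> complex" where
  "BB n c Q = (\<Sum>k=1..n. c k * string_entry Q (zs n) (ej n k))"
definition TT :: "nat \<Rightarrow> (nat \<Rightarrow> complex) \<Rightarrow> pauli list \<Rightarrow> complex" where
  "TT n c Q = (\<Sum>j=1..n. \<Sum>k=1..n. cnj (c j) * c k * string_entry Q (ej n j) (ej n k))"

lemma length_ej[simp]: "length (ej n j) = n" by (simp add: ej_def)
lemma length_zs[simp]: "length (zs n) = n" by (simp add: zs_def)

lemma ej_Suc: "ej (Suc n) j = ej n j @ [Suc n = j]" by (simp add: ej_def)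
lemma ej_last: "ej n (Suc n) = zs n" by (simp add: ej_def zs_def list_eq_iff_nth_eq)
lemma zs_Suc: "zs (Suc n) = zs n @ [False]" by (simp add: zs_def replicate_append_same)

lemma se_snoc:
  assumes "length Q = length a" "length b = length a"
  shows "string_entry (Q @ [p]) (a @ [x]) (b @ [y]) = string_entry Q a b * pauli_entry p x y"
  using assms by (simp add: string_entry_def nth_append)

lemma pauli_herm: "pauli_entry p a b = cnj (pauli_entry p b a)"
  by (cases p) auto

lemma se_herm: "string_entry Q a b = cnj (string_entry Q b a)"
  by (simp add: string_entry_def pauli_herm[of _ "a ! _"])

lemma pauli_UNIV: "(UNIV :: pauli set) = {PI,PX,PY,PZ}"
  using pauli.exhaust by auto

lemma ps_Suc: "pauli_strings (Suc n) = (\<lambda>(Q,p). Q @ [p]) ` (pauli_strings n \<times> UNIV)"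
proof -
  have "xs \<in> (\<lambda>(Q,p). Q @ [p]) ` (pauli_strings n \<times> UNIV)" if "length xs = Suc n" for xs
  proof -
    obtain Q p where "xs = Q @ [p]" using \<open>length xs = Suc n\<close>
      by (metis length_Suc_conv_rev)
    then show ?thesis using that by (auto simp: pauli_strings_def image_iff)
  qed
  then show ?thesis by (auto simp: pauli_strings_def)
qed

lemma finite_ps[simp]: "finite (pauli_strings n)"
proof (induction n)
  case 0 then show ?case by (simp add: pauli_strings_def)
next
  case (Suc n) then show ?case by (simp add: ps_Suc pauli_UNIV)
qed

lemma sum_ps_Suc:
  "(\<Sum>P\<in>pauli_strings (Suc n). f P) = (\<Sum>Q\<in>pauli_strings n. f (Q@[PI]) + f (Q@[PX]) + f (Q@[PY]) + f (Q@[PZ]))"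
proof -
  have inj: "inj_on (\<lambda>(Q,p). Q @ [p]) (pauli_strings n \<times> UNIV)"
    by (auto simp: inj_on_def)
  have "(\<Sum>P\<in>pauli_strings (Suc n). f P) = (\<Sum>x\<in>pauli_strings n \<times> UNIV. f ((\<lambda>(Q,p). Q @ [p]) x))"
    unfolding ps_Suc by (rule sum.reindex[OF inj, unfolded comp_def])
  also have "\<dots> = (\<Sum>Q\<in>pauli_strings n. \<Sum>p\<in>UNIV. f (Q @ [p]))"
    by (subst sum.cartesian_product) (simp add: case_prod_beta)
  also have "\<dots> = (\<Sum>Q\<in>pauli_strings n. f (Q@[PI]) + f (Q@[PX]) + f (Q@[PY]) + f (Q@[PZ]))"
    by (simp add: pauli_UNIV add.assoc)
  finally show ?thesis .
qed

lemma ps_0: "pauli_strings 0 = {[]}" by (auto simp: pauli_strings_def)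


lemma AA_snoc: "length Q = n \<Longrightarrow> AA (Suc n) (Q @ [p]) = AA n Q * pauli_entry p False False"
  by (simp add: AA_def zs_Suc se_snoc)

lemma BB_snoc: "length Q = n \<Longrightarrow>
  BB (Suc n) c (Q @ [p]) = BB n c Q * pauli_entry p False False + c (Suc n) * AA n Q * pauli_entry p False True"
proof -
  assume l: "length Q = n"
  have "BB (Suc n) c (Q @ [p]) = (\<Sum>k=1..n. c k * string_entry (Q@[p]) (zs (Suc n)) (ej (Suc n) k))
        + c (Suc n) * string_entry (Q@[p]) (zs (Suc n)) (ej (Suc n) (Suc n))"
    by (simp add: BB_def)
  also have "(\<Sum>k=1..n. c k * string_entry (Q@[p]) (zs (Suc n)) (ej (Suc n) k))
      = (\<Sum>k=1..n. c k * string_entry Q (zs n) (ej n k)) * pauli_entry p False False"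
    unfolding sum_distrib_right
    by (rule sum.cong) (auto simp: zs_Suc ej_Suc se_snoc l)
  also have "string_entry (Q@[p]) (zs (Suc n)) (ej (Suc n) (Suc n)) = AA n Q * pauli_entry p False True"
    by (simp add: zs_Suc ej_Suc se_snoc l ej_last AA_def)
  finally show ?thesis by (simp add: BB_def mult.assoc)
qed

lemma BBc: "(\<Sum>j=1..n. cnj (c j) * string_entry Q (ej n j) (zs n)) = cnj (BB n c Q)"
  by (simp add: BB_def se_herm[of Q "ej n _"])

lemma TT_snoc: "length Q = n \<Longrightarrow>
  TT (Suc n) c (Q @ [p]) = TT n c Q * pauli_entry p False False
    + cnj (c (Suc n)) * BB n c Q * pauli_entry p True False
    + c (Suc n) * cnj (BB n c Q) * pauli_entry p False True
    + cnj (c (Suc n)) * c (Suc n) * AA n Q * pauli_entry p True True"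
proof -
  assume l: "length Q = n"
  let ?E = "\<lambda>j k. string_entry (Q@[p]) (ej (Suc n) j) (ej (Suc n) k)"
  have e1: "?E j k = string_entry Q (ej n j) (ej n k) * pauli_entry p False False"
    if "j \<in> {1..n}" "k \<in> {1..n}" for j k using that by (simp add: ej_Suc se_snoc l)
  have e2: "?E j (Suc n) = string_entry Q (ej n j) (zs n) * pauli_entry p False True"
    if "j \<in> {1..n}" for j using that by (simp add: ej_Suc se_snoc l ej_last)
  have e3: "?E (Suc n) k = string_entry Q (zs n) (ej n k) * pauli_entry p True False"
    if "k \<in> {1..n}" for k using that by (simp add: ej_Suc se_snoc l ej_last)
  have e4: "?E (Suc n) (Suc n) = AA n Q * pauli_entry p True True"
    by (simp add: ej_Suc se_snoc l ej_last AA_def)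
  have "TT (Suc n) c (Q @ [p]) = (\<Sum>j=1..n. (\<Sum>k=1..n. cnj (c j) * c k * ?E j k) + cnj (c j) * c (Suc n) * ?E j (Suc n))
     + ((\<Sum>k=1..n. cnj (c (Suc n)) * c k * ?E (Suc n) k) + cnj (c (Suc n)) * c (Suc n) * ?E (Suc n) (Suc n))"
    by (simp add: TT_def)
  also have "\<dots> = (\<Sum>j=1..n. (\<Sum>k=1..n. cnj (c j) * c k * string_entry Q (ej n j) (ej n k)) * pauli_entry p False False
        + cnj (c j) * string_entry Q (ej n j) (zs n) * (c (Suc n) * pauli_entry p False True))
     + ((\<Sum>k=1..n. c k * string_entry Q (zs n) (ej n k)) * (cnj (c (Suc n)) * pauli_entry p True False) + cnj (c (Suc n)) * c (Suc n) * (AA n Q * pauli_entry p True True))"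
  proof -
    have "(\<Sum>k=1..n. cnj (c j) * c k * ?E j k) + cnj (c j) * c (Suc n) * ?E j (Suc n)
       = (\<Sum>k=1..n. cnj (c j) * c k * string_entry Q (ej n j) (ej n k)) * pauli_entry p False False
        + cnj (c j) * string_entry Q (ej n j) (zs n) * (c (Suc n) * pauli_entry p False True)"
      if "j \<in> {1..n}" for j
      using that by (simp add: sum_distrib_right sum_distrib_left e1 e2 mult_ac)
    moreover have "(\<Sum>k=1..n. cnj (c (Suc n)) * c k * ?E (Suc n) k) = (\<Sum>k=1..n. c k * string_entry Q (zs n) (ej n k)) * (cnj (c (Suc n)) * pauli_entry p True False)"
      by (simp add: sum_distrib_right sum_distrib_left e3 mult_ac)
    ultimately show ?thesis using e4 by simp
  qed
  also have "\<dots> = TT n c Q * pauli_entry p False False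
    + cnj (c (Suc n)) * BB n c Q * pauli_entry p True False
    + c (Suc n) * cnj (BB n c Q) * pauli_entry p False True
    + cnj (c (Suc n)) * c (Suc n) * AA n Q * pauli_entry p True True"
    unfolding BBc[symmetric] by (simp add: sum.distrib TT_def BB_def sum_distrib_right sum_distrib_left algebra_simps)
  finally show ?thesis .
qed


lemma ps_len: "Q \<in> pauli_strings n \<Longrightarrow> length Q = n" by (simp add: pauli_strings_def)

lemma Im_AA: "Q \<in> pauli_strings n \<Longrightarrow> Im (AA n Q) = 0"
proof (induction n arbitrary: Q)
  case 0 then show ?case by (simp add: ps_0 AA_def string_entry_def)
next
  case (Suc n)
  then obtain R p where Q: "Q = R @ [p]" "R \<in> pauli_strings n" by (auto simp: ps_Suc)
  then show ?case using Suc.IH[of R] by (cases p) (simp_all add: AA_snoc ps_len)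
qed

lemma AA_real: "Q \<in> pauli_strings n \<Longrightarrow> AA n Q = complex_of_real (Re (AA n Q))"
  using Im_AA by (simp add: complex_eq_iff)

lemma sumA4: "(\<Sum>Q\<in>pauli_strings n. Re (AA n Q) ^ 4) = 2 ^ n"
proof (induction n)
  case 0 then show ?case by (simp add: ps_0 AA_def string_entry_def)
next
  case (Suc n)
  have "(\<Sum>Q\<in>pauli_strings (Suc n). Re (AA (Suc n) Q) ^ 4) = (\<Sum>Q\<in>pauli_strings n. 2 * Re (AA n Q) ^ 4)"
    unfolding sum_ps_Suc by (rule sum.cong) (auto simp: AA_snoc ps_len)
  then show ?case using Suc by (simp add: sum_distrib_left[symmetric])
qed

lemma cnj_mult_self: "cnj z * z = complex_of_real (cmod z ^ 2)"
  by (simp add: complex_eq_iff cmod_power2) (simp add: power2_eq_square)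

lemma stepA: "length Q = n \<Longrightarrow>
   Re (AA (Suc n) (Q@[PI])) = Re (AA n Q) \<and> Re (AA (Suc n) (Q@[PZ])) = Re (AA n Q)
 \<and> Re (AA (Suc n) (Q@[PX])) = 0 \<and> Re (AA (Suc n) (Q@[PY])) = 0"
  by (simp add: AA_snoc)

lemma stepT: "length Q = n \<Longrightarrow>
   Re (TT (Suc n) c (Q@[PI])) = Re (TT n c Q) + cmod (c (Suc n)) ^ 2 * Re (AA n Q)
 \<and> Re (TT (Suc n) c (Q@[PZ])) = Re (TT n c Q) - cmod (c (Suc n)) ^ 2 * Re (AA n Q)
 \<and> Re (TT (Suc n) c (Q@[PX])) = 2 * Re (cnj (c (Suc n)) * BB n c Q)
 \<and> Re (TT (Suc n) c (Q@[PY])) = 2 * Re (\<i> * (cnj (c (Suc n)) * BB n c Q))"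
  by (simp add: TT_snoc cnj_mult_self)

lemma stepB: "length Q = n \<Longrightarrow>
   BB (Suc n) c (Q@[PI]) = BB n c Q \<and> BB (Suc n) c (Q@[PZ]) = BB n c Q
 \<and> BB (Suc n) c (Q@[PX]) = c (Suc n) * AA n Q \<and> BB (Suc n) c (Q@[PY]) = - \<i> * (c (Suc n) * AA n Q)"
  by (simp add: BB_snoc)


lemma sumAT2: "(\<Sum>Q\<in>pauli_strings n. Re (AA n Q) ^ 2 * Re (TT n c Q) ^ 2) = 2 ^ n * (\<Sum>j=1..n. cmod (c j) ^ 4)"
proof (induction n)
  case 0 then show ?case by (simp add: ps_0 TT_def)
next
  case (Suc n)
  let ?x = "cmod (c (Suc n)) ^ 2"
  have "(\<Sum>Q\<in>pauli_strings (Suc n). Re (AA (Suc n) Q) ^ 2 * Re (TT (Suc n) c Q) ^ 2)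
     = (\<Sum>Q\<in>pauli_strings n. 2 * (Re (AA n Q) ^ 2 * Re (TT n c Q) ^ 2) + 2 * ?x ^ 2 * Re (AA n Q) ^ 4)"
    unfolding sum_ps_Suc
  proof (rule sum.cong[OF refl])
    fix Q assume Q: "Q \<in> pauli_strings n"
    have l: "length Q = n" using Q by (rule ps_len)
    show "Re (AA (Suc n) (Q @ [PI])) ^ 2 * Re (TT (Suc n) c (Q @ [PI])) ^ 2 +
        Re (AA (Suc n) (Q @ [PX])) ^ 2 * Re (TT (Suc n) c (Q @ [PX])) ^ 2 +
        Re (AA (Suc n) (Q @ [PY])) ^ 2 * Re (TT (Suc n) c (Q @ [PY])) ^ 2 +
        Re (AA (Suc n) (Q @ [PZ])) ^ 2 * Re (TT (Suc n) c (Q @ [PZ])) ^ 2 =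
        2 * (Re (AA n Q) ^ 2 * Re (TT n c Q) ^ 2) + 2 * ?x ^ 2 * Re (AA n Q) ^ 4"
      by (simp only: stepA[OF l] stepT[OF l] power2_eq_square power4_eq_xxxx) algebra
  qed
  also have "\<dots> = 2 * (\<Sum>Q\<in>pauli_strings n. Re (AA n Q) ^ 2 * Re (TT n c Q) ^ 2) + 2 * ?x ^ 2 * (\<Sum>Q\<in>pauli_strings n. Re (AA n Q) ^ 4)"
    by (simp add: sum.distrib sum_distrib_left)
  also have "\<dots> = 2 ^ Suc n * (\<Sum>j=1..Suc n. cmod (c j) ^ 4)"
    unfolding Suc sumA4 by (simp add: algebra_simps power_mult_distrib[symmetric] flip: power_mult)
  finally show ?case .
qed

definition g4 :: "complex \<Rightarrow> real" where "g4 z = Re z ^ 4 + Re (\<i> * z) ^ 4"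

lemma g4_real: "g4 (z * complex_of_real r) = g4 z * r ^ 4"
  by (simp add: g4_def power_mult_distrib algebra_simps)

lemma g4_i: "g4 (- \<i> * z) = g4 z" "g4 (\<i> * z) = g4 z"
  by (simp_all add: g4_def algebra_simps)

lemma sumB4: "(\<Sum>Q\<in>pauli_strings n. g4 (w * BB n c Q)) = 2 ^ n * (\<Sum>k=1..n. g4 (w * c k))"
proof (induction n)
  case 0 then show ?case by (simp add: ps_0 BB_def g4_def)
next
  case (Suc n)
  have "(\<Sum>Q\<in>pauli_strings (Suc n). g4 (w * BB (Suc n) c Q))
     = (\<Sum>Q\<in>pauli_strings n. 2 * g4 (w * BB n c Q) + 2 * g4 (w * c (Suc n)) * Re (AA n Q) ^ 4)"
    unfolding sum_ps_Suc
  proof (rule sum.cong[OF refl])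
    fix Q assume Q: "Q \<in> pauli_strings n"
    have l: "length Q = n" using Q by (rule ps_len)
    have A: "AA n Q = complex_of_real (Re (AA n Q))" using AA_real[OF Q] .
    have 1: "w * (c (Suc n) * AA n Q) = (w * c (Suc n)) * complex_of_real (Re (AA n Q))"
      by (subst A) (simp add: mult_ac)
    have 2: "w * (- \<i> * (c (Suc n) * AA n Q)) = - \<i> * ((w * c (Suc n)) * complex_of_real (Re (AA n Q)))"
      by (subst A) (simp add: mult_ac)
    show "g4 (w * BB (Suc n) c (Q @ [PI])) + g4 (w * BB (Suc n) c (Q @ [PX])) +
          g4 (w * BB (Suc n) c (Q @ [PY])) + g4 (w * BB (Suc n) c (Q @ [PZ])) =
          2 * g4 (w * BB n c Q) + 2 * g4 (w * c (Suc n)) * Re (AA n Q) ^ 4"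
      by (simp only: stepB[OF l] 1 2 g4_i g4_real)
  qed
  also have "\<dots> = 2 * (\<Sum>Q\<in>pauli_strings n. g4 (w * BB n c Q)) + 2 * g4 (w * c (Suc n)) * (\<Sum>Q\<in>pauli_strings n. Re (AA n Q) ^ 4)"
    by (simp add: sum.distrib sum_distrib_left)
  also have "\<dots> = 2 ^ Suc n * (\<Sum>k=1..Suc n. g4 (w * c k))"
    unfolding Suc sumA4 by (simp add: algebra_simps)
  finally show ?case .
qed


primrec FF :: "(nat \<Rightarrow> complex) \<Rightarrow> nat \<Rightarrow> real" where
  "FF c 0 = 0"
| "FF c (Suc n) = 2 * FF c n + 2 ^ n * (2 * cmod (c (Suc n)) ^ 8
     + 12 * cmod (c (Suc n)) ^ 4 * (\<Sum>j=1..n. cmod (c j) ^ 4)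
     + 16 * (\<Sum>k=1..n. g4 (cnj (c (Suc n)) * c k)))"

lemma sumT4: "(\<Sum>Q\<in>pauli_strings n. Re (TT n c Q) ^ 4) = FF c n"
proof (induction n)
  case 0 then show ?case by (simp add: ps_0 TT_def)
next
  case (Suc n)
  let ?x = "cmod (c (Suc n)) ^ 2"
  let ?w = "cnj (c (Suc n))"
  have "(\<Sum>Q\<in>pauli_strings (Suc n). Re (TT (Suc n) c Q) ^ 4)
     = (\<Sum>Q\<in>pauli_strings n. 2 * Re (TT n c Q) ^ 4 + 12 * ?x ^ 2 * (Re (AA n Q) ^ 2 * Re (TT n c Q) ^ 2)
         + 2 * ?x ^ 4 * Re (AA n Q) ^ 4 + 16 * g4 (?w * BB n c Q))"
    unfolding sum_ps_Suc
  proof (rule sum.cong[OF refl])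
    fix Q assume Q: "Q \<in> pauli_strings n"
    have l: "length Q = n" using Q by (rule ps_len)
    show "Re (TT (Suc n) c (Q @ [PI])) ^ 4 + Re (TT (Suc n) c (Q @ [PX])) ^ 4 +
        Re (TT (Suc n) c (Q @ [PY])) ^ 4 + Re (TT (Suc n) c (Q @ [PZ])) ^ 4 =
        2 * Re (TT n c Q) ^ 4 + 12 * ?x ^ 2 * (Re (AA n Q) ^ 2 * Re (TT n c Q) ^ 2)
         + 2 * ?x ^ 4 * Re (AA n Q) ^ 4 + 16 * g4 (?w * BB n c Q)"
      by (simp only: stepT[OF l] g4_def power2_eq_square power4_eq_xxxx) algebra
  qed
  also have "\<dots> = 2 * (\<Sum>Q\<in>pauli_strings n. Re (TT n c Q) ^ 4) + 12 * ?x ^ 2 * (\<Sum>Q\<in>pauli_strings n. Re (AA n Q) ^ 2 * Re (TT n c Q) ^ 2)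
        + 2 * ?x ^ 4 * (\<Sum>Q\<in>pauli_strings n. Re (AA n Q) ^ 4) + 16 * (\<Sum>Q\<in>pauli_strings n. g4 (?w * BB n c Q))"
    by (simp add: sum.distrib sum_distrib_left)
  also have "\<dots> = FF c (Suc n)"
    unfolding Suc sumA4 sumAT2 sumB4 by (simp add: algebra_simps flip: power_mult)
  finally show ?case .
qed


lemma trig4: fixes x :: real shows "cos x ^ 4 + sin x ^ 4 = (3 + cos (4 * x)) / 4"
proof -
  have "cos (4 * x) = cos (2 * x) ^ 2 - sin (2 * x) ^ 2" using cos_double[of "2*x"] by simp
  also have "\<dots> = (cos x ^ 2 - sin x ^ 2) ^ 2 - (2 * sin x * cos x) ^ 2"
    by (simp add: cos_double sin_double)
  finally have "cos (4 * x) = (cos x ^ 2 - sin x ^ 2) ^ 2 - (2 * sin x * cos x) ^ 2" .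
  moreover have "sin x ^ 2 + cos x ^ 2 = 1" by simp
  ultimately show ?thesis by algebra
qed

lemma g4_cis: "g4 (cis x) = (3 + cos (4 * x)) / 4"
  by (simp add: g4_def trig4[symmetric])

lemma cmod_sq_add: "cmod (a + b) ^ 2 = cmod a ^ 2 + cmod b ^ 2 + 2 * Re (a * cnj b)"
  by (simp add: cmod_power2) (simp add: power2_eq_square algebra_simps)

definition cw :: "nat \<Rightarrow> (nat \<Rightarrow> real) \<Rightarrow> nat \<Rightarrow> complex" where
  "cw N th j = complex_of_real (1 / sqrt (real N)) * cis (th j)"

lemma cw_norm: "N \<ge> 1 \<Longrightarrow> cmod (cw N th j) ^ 2 = 1 / real N"
  by (simp add: cw_def norm_divide power_divide)

lemma cw_prod: "N \<ge> 1 \<Longrightarrow> cnj (cw N th a) * cw N th b = cis (th b - th a) * complex_of_real (1 / real N)"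
proof -
  assume N: "N \<ge> 1"
  have "cnj (cw N th a) * cw N th b = complex_of_real (1 / sqrt (real N) * (1 / sqrt (real N))) * (cis (th b) * cis (- th a))"
    unfolding cw_def complex_cnj_mult complex_cnj_complex_of_real cis_cnj of_real_mult by (simp only: mult_ac)
  also have "1 / sqrt (real N) * (1 / sqrt (real N)) = 1 / real N"
    using real_sqrt_pow2[of "real N"] by (simp add: power2_eq_square)
  also have "cis (th b) * cis (- th a) = cis (th b - th a)"
    by (simp add: cis_mult)
  also have "complex_of_real (1 / real N) * cis (th b - th a) = cis (th b - th a) * complex_of_real (1 / real N)"
    by (simp add: mult.commute)
  finally show ?thesis .
qed

lemma FF_spec: assumes N: "N \<ge> 1"
  shows "FF (cw N th) m = 2 ^ m / real N ^ 4 * (6 * real m * (real m - 1) + cmod (\<Sum>j=1..m. cis (4 * th j)) ^ 2)"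
proof (induction m)
  case 0 then show ?case by simp
next
  case (Suc m)
  let ?S = "\<Sum>j=1..m. cis (4 * th j)"
  have n4: "cmod (cw N th j) ^ 4 = 1 / real N ^ 2" for j
  proof -
    have "cmod (cw N th j) ^ 4 = (cmod (cw N th j) ^ 2) ^ 2" by (simp flip: power_mult)
    then show ?thesis using cw_norm[OF N, of th j] by (simp add: power_divide)
  qed
  have n8: "cmod (cw N th j) ^ 8 = 1 / real N ^ 4" for j
  proof -
    have "cmod (cw N th j) ^ 8 = (cmod (cw N th j) ^ 2) ^ 4" by (simp flip: power_mult)
    then show ?thesis using cw_norm[OF N, of th j] by (simp add: power_divide)
  qed
  have g: "g4 (cnj (cw N th (Suc m)) * cw N th k) = (3 + cos (4 * th k - 4 * th (Suc m))) / 4 / real N ^ 4" for k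
    unfolding cw_prod[OF N] g4_real g4_cis by (simp add: power_divide field_simps)
  have S: "cmod (\<Sum>j=1..Suc m. cis (4 * th j)) ^ 2 = cmod ?S ^ 2 + 1 + 2 * (\<Sum>k=1..m. cos (4 * th k - 4 * th (Suc m)))"
  proof -
    have "(\<Sum>j=1..Suc m. cis (4 * th j)) = ?S + cis (4 * th (Suc m))" by simp
    moreover have "Re (?S * cnj (cis (4 * th (Suc m)))) = (\<Sum>k=1..m. cos (4 * th k - 4 * th (Suc m)))"
      by (simp add: sum_distrib_right cis_cnj cis_mult Re_sum)
    ultimately show ?thesis by (simp add: cmod_sq_add)
  qed
  show ?case
    using N unfolding FF.simps Suc n4 n8 g S
    by (simp add: sum_divide_distrib[symmetric] sum.distrib field_simps)
qed


lemma finite_bs[simp]: "finite (basis_states n)"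
proof -
  have "basis_states n = {xs. set xs \<subseteq> UNIV \<and> length xs = n}" by (auto simp: basis_states_def)
  then show ?thesis using finite_lists_length_eq[of "UNIV :: bool set" n] by simp
qed

lemma ej_bs[simp]: "ej n j \<in> basis_states n" by (simp add: basis_states_def)
lemma zs_bs[simp]: "replicate n False \<in> basis_states n" by (simp add: basis_states_def)

lemma sum_delta_gen: fixes f :: "'a \<Rightarrow> complex" and c :: "'b \<Rightarrow> complex" shows "finite S \<Longrightarrow> (\<And>k. k \<in> K \<Longrightarrow> e k \<in> S) \<Longrightarrow> finite K \<Longrightarrow>
  (\<Sum>b\<in>S. f b * (\<Sum>k\<in>K. c k * (if b = e k then 1 else 0))) = (\<Sum>k\<in>K. c k * f (e k))"
proof -
  assume S: "finite S" and e: "\<And>k. k \<in> K \<Longrightarrow> e k \<in> S" and K: "finite K"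
  have "(\<Sum>b\<in>S. f b * (\<Sum>k\<in>K. c k * (if b = e k then 1 else 0))) = (\<Sum>k\<in>K. \<Sum>b\<in>S. c k * (if b = e k then f b else 0))"
  proof -
    have "f b * (\<Sum>k\<in>K. c k * (if b = e k then 1 else 0)) = (\<Sum>k\<in>K. c k * (if b = e k then f b else 0))" for b
      unfolding sum_distrib_left by (rule sum.cong) auto
    then show ?thesis by (simp add: sum.swap[of _ S])
  qed
  also have "\<dots> = (\<Sum>k\<in>K. c k * f (e k))"
    using S e by (simp add: sum_distrib_left[symmetric] sum.delta'[OF S] cong: if_cong)
  finally show ?thesis .
qed

lemma Xon_entry: assumes "length a = n" "j \<in> {1..n}"
  shows "apply_string n (X_on n j) (zero_state n) a = (if a = ej n j then 1 else 0)"
proof -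
  have "apply_string n (X_on n j) (zero_state n) a = string_entry (X_on n j) a (replicate n False)"
    by (simp add: apply_string_def zero_state_def mult.commute[of "string_entry _ _ _"] if_distrib cong: if_cong)
  also have "\<dots> = (\<Prod>k<n. if a ! k = (Suc k = j) then 1 else 0)"
    unfolding string_entry_def X_on_def using assms
    by (intro prod.cong) auto
  also have "\<dots> = (if a = ej n j then 1 else 0)"
  proof (cases "a = ej n j")
    case True then show ?thesis by (simp add: ej_def)
  next
    case False
    have "\<exists>k<n. a ! k \<noteq> ej n j ! k"
    proof (rule ccontr)
      assume "\<not> (\<exists>k<n. a ! k \<noteq> ej n j ! k)"
      then have "a = ej n j" using assms(1) by (intro nth_equalityI) auto
      then show False using False by simp
    qed
    then obtain k where "k < n" "a ! k \<noteq> ej n j ! k" by blast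
    then have "(\<Prod>k<n. if a ! k = (Suc k = j) then 1 else (0::complex)) = 0"
      by (intro prod_zero) (auto simp: ej_def intro!: bexI[of _ k])
    then show ?thesis using False by simp
  qed
  finally show ?thesis .
qed

lemma W_eq: "a \<in> basis_states n \<Longrightarrow> W_state n th a = (\<Sum>j=1..n. cw n th j * (if a = ej n j then 1 else 0))"
  unfolding W_state_def sum_distrib_left
  by (intro sum.cong refl) (simp add: Xon_entry basis_states_def cw_def mult_ac)

lemma Xi_W: "Xi n (W_state n th) P = Re (TT n (cw n th) P)"
proof -
  let ?c = "cw n th"
  have "(\<Sum>a\<in>basis_states n. cnj (W_state n th a) * apply_string n P (W_state n th) a)
      = (\<Sum>a\<in>basis_states n. (\<Sum>k=1..n. ?c k * string_entry P a (ej n k)) * (\<Sum>j=1..n. cnj (?c j) * (if a = ej n j then 1 else 0)))"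
  proof (rule sum.cong[OF refl])
    fix a assume a: "a \<in> basis_states n"
    have "apply_string n P (W_state n th) a = (\<Sum>b\<in>basis_states n. string_entry P a b * (\<Sum>j=1..n. ?c j * (if b = ej n j then 1 else 0)))"
      unfolding apply_string_def by (intro sum.cong refl) (simp add: W_eq)
    also have "\<dots> = (\<Sum>k=1..n. ?c k * string_entry P a (ej n k))"
      by (rule sum_delta_gen) auto
    finally show "cnj (W_state n th a) * apply_string n P (W_state n th) a = (\<Sum>k=1..n. ?c k * string_entry P a (ej n k)) * (\<Sum>j=1..n. cnj (?c j) * (if a = ej n j then 1 else 0))"
      using a by (simp add: W_eq cnj_sum mult.commute if_distrib cong: if_cong)
  qed
  also have "\<dots> = (\<Sum>j=1..n. cnj (?c j) * (\<Sum>k=1..n. ?c k * string_entry P (ej n j) (ej n k)))"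
    by (rule sum_delta_gen) auto
  also have "\<dots> = TT n ?c P"
    by (simp add: TT_def sum_distrib_left mult_ac)
  finally show ?thesis by (simp add: Xi_def)
qed

lemma norm_W: "n \<ge> 1 \<Longrightarrow> Xi_norm4_pow4 n (W_state n th) = 2 ^ n / real n ^ 4 * (6 * real n * (real n - 1) + cmod (\<Sum>j=1..n. cis (4 * th j)) ^ 2)"
  by (simp add: Xi_norm4_pow4_def Xi_W sumT4 FF_spec)


lemma D_pos: "n \<ge> 1 \<Longrightarrow> 0 < 6 * real n * (real n - 1) + cmod (\<Sum>j=1..n. cis (4 * th j)) ^ 2"
proof (cases "n = 1")
  case True then show ?thesis by simp
next
  case False
  assume "n \<ge> 1"
  then have "real n \<ge> 2" using False by simp
  then have "0 < 6 * real n * (real n - 1)" by simp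
  then show ?thesis by (smt (verit) zero_le_power2)
qed

lemma neglog: "0 < x \<Longrightarrow> 0 < y \<Longrightarrow> - log 2 (x / y) = log 2 (y / x)"
  by (simp add: log_divide)

lemma cis_minus1: "cmod (cis (2 * b) - 1) ^ 2 = 4 * sin b ^ 2"
proof -
  have "cmod (cis (2 * b) - 1) ^ 2 = (cos (2*b) - 1) ^ 2 + sin (2*b) ^ 2"
    by (simp add: cmod_power2)
  also have "\<dots> = 4 * sin b ^ 2"
  proof -
    have c: "cos (2*b) = 1 - 2 * sin b ^ 2" using cos_double[of b] sin_cos_squared_add[of b] by algebra
    have s: "sin (2*b) = 2 * sin b * cos b" by (simp add: sin_double)
    show ?thesis unfolding c s using sin_cos_squared_add[of b] by algebra
  qed
  finally show ?thesis .
qed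

lemma geo_sum: "((z::complex) - 1) * (\<Sum>j=1..n. z ^ j) = z ^ (Suc n) - z"
  by (induction n) (simp_all add: algebra_simps)

lemma geo_W: "cmod (\<Sum>j=1..n. cis (4 * (real j * t))) ^ 2
   = (if sin (2 * t) = 0 then (real n)\<^sup>2 else (sin (2 * real n * t))\<^sup>2 / (sin (2 * t))\<^sup>2)"
proof -
  let ?z = "cis (4 * t)"
  have zj: "cis (4 * (real j * t)) = ?z ^ j" for j by (simp add: DeMoivre mult_ac)
  show ?thesis
  proof (cases "sin (2 * t) = 0")
    case True
    have "sin (4 * t) = 0" using sin_double[of "2*t"] True by simp
    moreover have "cos (4 * t) = 1" using cos_double[of "2*t"] sin_cos_squared_add[of "2*t"] True by simp
    ultimately have "?z = 1" by (simp add: complex_eq_iff)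
    then show ?thesis using True by (simp add: zj)
  next
    case False
    have "cmod (?z - 1) ^ 2 * cmod (\<Sum>j=1..n. ?z ^ j) ^ 2 = cmod (?z ^ Suc n - ?z) ^ 2"
      by (simp only: geo_sum[symmetric] norm_mult power_mult_distrib)
    also have "?z ^ Suc n - ?z = ?z * (?z ^ n - 1)" by (simp add: algebra_simps)
    also have "cmod (?z * (?z ^ n - 1)) ^ 2 = cmod (?z ^ n - 1) ^ 2" by (simp add: norm_mult)
    also have "?z ^ n = cis (2 * (2 * real n * t))" by (simp add: DeMoivre mult_ac)
    finally have "4 * sin (2*t) ^ 2 * cmod (\<Sum>j=1..n. ?z ^ j) ^ 2 = 4 * sin (2 * real n * t) ^ 2"
      using cis_minus1[of "2*t"] cis_minus1[of "2 * real n * t"] by (simp add: mult_ac)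
    moreover have "(\<Sum>j=1..n. cis (4 * (real j * t))) = (\<Sum>j=1..n. ?z ^ j)" by (simp only: zj)
    ultimately show ?thesis using False by (simp add: field_simps)
  qed
qed


lemma M2_W: "n \<ge> 1 \<Longrightarrow> M2 n (W_state n th) = log 2 (real n ^ 4 / (6 * real n * (real n - 1) + cmod (\<Sum>j=1..n. cis (4 * th j)) ^ 2))"
proof -
  assume n: "n \<ge> 1"
  have "Xi_norm4_pow4 n (W_state n th) / 2 ^ n = (6 * real n * (real n - 1) + cmod (\<Sum>j=1..n. cis (4 * th j)) ^ 2) / real n ^ 4"
    using n by (simp add: norm_W)
  then show ?thesis unfolding M2_def using n D_pos[OF n, of th] by (simp add: neglog)
qed

theorem mainTheorem13:
  fixes n :: nat and \<theta>s :: "nat \<Rightarrow> real" and \<theta> :: real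
  assumes "n \<ge> 1"
  shows "Xi_norm4_pow4 n (W_state n \<theta>s)
           = 2 ^ n / real n ^ 4 * (6 * real n * (real n - 1) + (cmod (\<Sum>j=1..n. cis (4 * \<theta>s j)))\<^sup>2)
       \<and> M2 n (W_state n \<theta>s)
           = log 2 (real n ^ 4 / (6 * real n * (real n - 1) + (cmod (\<Sum>j=1..n. cis (4 * \<theta>s j)))\<^sup>2))
       \<and> Xi_norm4_pow4 n (W_state n (\<lambda>j. 0)) = 2 ^ n * (7 * real n - 6) / real n ^ 3
       \<and> M2 n (W_state n (\<lambda>j. 0)) = log 2 (real n ^ 3 / (7 * real n - 6))
       \<and> (let r = (if sin (2 * \<theta>) = 0 then (real n)\<^sup>2
                   else (sin (2 * real n * \<theta>))\<^sup>2 / (sin (2 * \<theta>))\<^sup>2)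
          in Xi_norm4_pow4 n (W_state n (\<lambda>j. real j * \<theta>))
               = 2 ^ n * (6 * (real n)\<^sup>2 - 6 * real n + r) / real n ^ 4
           \<and> M2 n (W_state n (\<lambda>j. real j * \<theta>))
               = log 2 (real n ^ 4 / (6 * (real n)\<^sup>2 - 6 * real n + r)))"
proof -
  have n: "n \<ge> 1" by (rule assms)
  have s0: "cmod (\<Sum>j=1..n. cis (4 * (0::real))) ^ 2 = (real n) ^ 2" by simp
  have e0: "6 * real n * (real n - 1) + (real n)\<^sup>2 = real n * (7 * real n - 6)"
    by (simp add: algebra_simps power2_eq_square)
  have P3: "Xi_norm4_pow4 n (W_state n (\<lambda>j. 0)) = 2 ^ n * (7 * real n - 6) / real n ^ 3"
  proof -
    have "Xi_norm4_pow4 n (W_state n (\<lambda>j. 0)) = 2 ^ n / real n ^ 4 * (real n * (7 * real n - 6))"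
      using norm_W[OF n, of "\<lambda>j. 0"] unfolding s0 e0 .
    also have "\<dots> = 2 ^ n * (7 * real n - 6) / real n ^ 3"
    proof -
      have h: "real n ^ 4 = real n * real n ^ 3" by (simp add: eval_nat_numeral)
      have "real n \<noteq> 0" using n by simp
      then show ?thesis unfolding h by (simp add: divide_simps)
    qed
    finally show ?thesis .
  qed
  have P4: "M2 n (W_state n (\<lambda>j. 0)) = log 2 (real n ^ 3 / (7 * real n - 6))"
  proof -
    have "real n ^ 4 / (real n * (7 * real n - 6)) = real n ^ 3 / (7 * real n - 6)"
    proof -
      have h: "real n ^ 4 = real n * real n ^ 3" by (simp add: eval_nat_numeral)
      have "real n \<noteq> 0" using n by simp
      then show ?thesis unfolding h by simp
    qed
    then show ?thesis using M2_W[OF n, of "\<lambda>j. 0"] by (simp only: s0 e0)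
  qed
  let ?r = "(if sin (2 * \<theta>) = 0 then (real n)\<^sup>2
                   else (sin (2 * real n * \<theta>))\<^sup>2 / (sin (2 * \<theta>))\<^sup>2)"
  have g: "cmod (\<Sum>j=1..n. cis (4 * (real j * \<theta>))) ^ 2 = ?r" by (rule geo_W)
  have e: "6 * real n * (real n - 1) + ?r = 6 * (real n)\<^sup>2 - 6 * real n + ?r"
    by (simp add: algebra_simps power2_eq_square)
  have P5: "Xi_norm4_pow4 n (W_state n (\<lambda>j. real j * \<theta>)) = 2 ^ n * (6 * (real n)\<^sup>2 - 6 * real n + ?r) / real n ^ 4"
    using norm_W[OF n, of "\<lambda>j. real j * \<theta>"] unfolding g e by simp
  have P6: "M2 n (W_state n (\<lambda>j. real j * \<theta>)) = log 2 (real n ^ 4 / (6 * (real n)\<^sup>2 - 6 * real n + ?r))"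
    using M2_W[OF n, of "\<lambda>j. real j * \<theta>"] unfolding g e by simp
  show ?thesis
    using norm_W[OF n] M2_W[OF n] P3 P4 P5 P6 by (simp add: Let_def)
qed

end
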